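(* Let $S$ be a finite, additively commutative, congruence-simple semiring with an infinity $\infty$ and with $|S|>2$. Then one of the following holds: (1) $S$ is additively idempotent, i.e. $x+x=x$ for all $x\in S$; (2) $x+y=\infty$ for all $x,y\in S$, and $(S,\cdot)$ is a congruence-free semigroup.
   Context: A semiring is a nonempty set $S$ with two associative binary operations $+$ and $\cdot$ satisfying both distributive laws $a(b+c)=ab+ac$ and $(a+b)c=ac+bc$; no identity elements are assumed. It is additively commutative if $(S,+)$ is commutative. An infinity of $S$ is an element $\infty$ with $\infty+x=x+\infty=\infty$ and $\infty x=x\infty=\infty$ for all $x\in S$. A congruence relation on $S$ is an equivalence relation $\sim$ such that $x_1\sim x_2$ implies $c+x_1\sim c+x_2$, $x_1+c\sim x_2+c$, $cx_1\sim cx_2$, $x_1c\sim x_2c$ for all $c\in S$. $S$ is congruence-simple if its only congruence relations are the identity relation and $S\times S$. A semigroup is congruence-free if its only congruences (equivalence relations compatible with left and right multiplication) are the identity relation and the full relation. *)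

theory Defs
  imports Main
begin

definition semiring_on :: "'a set \<Rightarrow> ('a \<Rightarrow> 'a \<Rightarrow> 'a) \<Rightarrow> ('a \<Rightarrow> 'a \<Rightarrow> 'a) \<Rightarrow> bool" where
  "semiring_on S add mul \<longleftrightarrow> S \<noteq> {} \<and>
     (\<forall>x\<in>S. \<forall>y\<in>S. add x y \<in> S \<and> mul x y \<in> S) \<and>
     (\<forall>x\<in>S. \<forall>y\<in>S. \<forall>z\<in>S. add (add x y) z = add x (add y z)) \<and>
     (\<forall>x\<in>S. \<forall>y\<in>S. \<forall>z\<in>S. mul (mul x y) z = mul x (mul y z)) \<and>
     (\<forall>a\<in>S. \<forall>b\<in>S. \<forall>c\<in>S. mul a (add b c) = add (mul a b) (mul a c)) \<and>
     (\<forall>a\<in>S. \<forall>b\<in>S. \<forall>c\<in>S. mul (add a b) c = add (mul a c) (mul b c))"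

definition add_commutative_on :: "'a set \<Rightarrow> ('a \<Rightarrow> 'a \<Rightarrow> 'a) \<Rightarrow> bool" where
  "add_commutative_on S add \<longleftrightarrow> (\<forall>x\<in>S. \<forall>y\<in>S. add x y = add y x)"

definition is_infinity :: "'a set \<Rightarrow> ('a \<Rightarrow> 'a \<Rightarrow> 'a) \<Rightarrow> ('a \<Rightarrow> 'a \<Rightarrow> 'a) \<Rightarrow> 'a \<Rightarrow> bool" where
  "is_infinity S add mul w \<longleftrightarrow> w \<in> S \<and>
     (\<forall>x\<in>S. add w x = w \<and> add x w = w \<and> mul w x = w \<and> mul x w = w)"

definition semiring_congruence :: "'a set \<Rightarrow> ('a \<Rightarrow> 'a \<Rightarrow> 'a) \<Rightarrow> ('a \<Rightarrow> 'a \<Rightarrow> 'a) \<Rightarrow> 'a rel \<Rightarrow> bool" where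
  "semiring_congruence S add mul R \<longleftrightarrow> equiv S R \<and>
     (\<forall>x1 x2 c. (x1, x2) \<in> R \<and> c \<in> S \<longrightarrow>
        (add c x1, add c x2) \<in> R \<and> (add x1 c, add x2 c) \<in> R \<and>
        (mul c x1, mul c x2) \<in> R \<and> (mul x1 c, mul x2 c) \<in> R)"

definition congruence_simple :: "'a set \<Rightarrow> ('a \<Rightarrow> 'a \<Rightarrow> 'a) \<Rightarrow> ('a \<Rightarrow> 'a \<Rightarrow> 'a) \<Rightarrow> bool" where
  "congruence_simple S add mul \<longleftrightarrow>
     (\<forall>R. semiring_congruence S add mul R \<longrightarrow> R = Id_on S \<or> R = S \<times> S)"

definition semigroup_congruence :: "'a set \<Rightarrow> ('a \<Rightarrow> 'a \<Rightarrow> 'a) \<Rightarrow> 'a rel \<Rightarrow> bool" where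
  "semigroup_congruence S mul R \<longleftrightarrow> equiv S R \<and>
     (\<forall>x1 x2 c. (x1, x2) \<in> R \<and> c \<in> S \<longrightarrow>
        (mul c x1, mul c x2) \<in> R \<and> (mul x1 c, mul x2 c) \<in> R)"

definition congruence_free :: "'a set \<Rightarrow> ('a \<Rightarrow> 'a \<Rightarrow> 'a) \<Rightarrow> bool" where
  "congruence_free S mul \<longleftrightarrow>
     (\<forall>R. semigroup_congruence S mul R \<longrightarrow> R = Id_on S \<or> R = S \<times> S)"

end

theory Submission
  imports Defs "HOL-Library.FuncSet"
begin

fun gm :: "('a \<Rightarrow> 'a \<Rightarrow> 'a) \<Rightarrow> nat \<Rightarrow> 'a \<Rightarrow> 'a" where
  "gm add 0 x = x"
| "gm add (Suc n) x = add x (gm add n x)"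

lemma gm_in: "semiring_on S add mul \<Longrightarrow> x \<in> S \<Longrightarrow> gm add n x \<in> S"
  by (induction n) (auto simp: semiring_on_def)

lemma gm_add_idx:
  assumes "semiring_on S add mul" "x \<in> S"
  shows "gm add (Suc (m + n)) x = add (gm add m x) (gm add n x)"
proof (induction m)
  case 0 then show ?case by simp
next
  case (Suc m)
  have "gm add (Suc (Suc m + n)) x = add x (add (gm add m x) (gm add n x))"
    using Suc by simp
  also have "\<dots> = add (add x (gm add m x)) (gm add n x)"
    using assms gm_in[OF assms(1)] unfolding semiring_on_def by metis
  finally show ?case by simp
qed

lemma gm_distrib:
  assumes "semiring_on S add mul" "add_commutative_on S add" "x \<in> S" "y \<in> S"
  shows "gm add n (add x y) = add (gm add n x) (gm add n y)"
proof (induction n)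
  case 0 then show ?case by simp
next
  case (Suc n)
  let ?a = "gm add n x" and ?b = "gm add n y"
  have a: "?a \<in> S" and b: "?b \<in> S" using gm_in assms by metis+
  have cl: "\<forall>u\<in>S. \<forall>v\<in>S. add u v \<in> S"
   and as: "\<forall>u\<in>S. \<forall>v\<in>S. \<forall>w\<in>S. add (add u v) w = add u (add v w)"
    using assms(1) unfolding semiring_on_def by auto
  have cm: "\<forall>u\<in>S. \<forall>v\<in>S. add u v = add v u"
    using assms(2) unfolding add_commutative_on_def by auto
  have "gm add (Suc n) (add x y) = add (add x y) (add ?a ?b)" using Suc by simp
  also have "\<dots> = add x (add y (add ?a ?b))" using as cl a b assms by simp
  also have "add y (add ?a ?b) = add ?a (add y ?b)"
    using as cl cm a b assms by metis
  also have "add x (add ?a (add y ?b)) = add (add x ?a) (add y ?b)"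
    using as cl a b assms by simp
  finally show ?case by simp
qed

lemma mul_gm:
  assumes "semiring_on S add mul" "x \<in> S" "c \<in> S"
  shows "mul c (gm add n x) = gm add n (mul c x) \<and> mul (gm add n x) c = gm add n (mul x c)"
proof (induction n)
  case 0 then show ?case by simp
next
  case (Suc n)
  have a: "gm add n x \<in> S" using gm_in assms by metis
  then show ?case using Suc assms unfolding semiring_on_def by simp
qed

lemma gm_gm:
  assumes "semiring_on S add mul" "x \<in> S"
  shows "gm add m (gm add n x) = gm add (m*n+m+n) x"
proof (induction m)
  case 0 then show ?case by simp
next
  case (Suc m)
  have "gm add (Suc m) (gm add n x) = add (gm add n x) (gm add (m*n+m+n) x)"
    using Suc by simp
  also have "\<dots> = gm add (Suc (n + (m*n+m+n))) x"
    using gm_add_idx[OF assms] by metis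
  finally show ?case by (simp add: algebra_simps)
qed

lemma gm_inf: "is_infinity S add mul w \<Longrightarrow> gm add n w = w"
  by (induction n) (auto simp: is_infinity_def)


lemma gm_period:
  assumes sr: "semiring_on S add mul" and cm: "add_commutative_on S add" and fin: "finite S"
  obtains N where "\<forall>x\<in>S. gm add N (gm add N x) = gm add N x \<and> add (gm add N x) (gm add N x) = gm add N x"
proof -
  define F where "F n = restrict (gm add n) S" for n
  have "range F \<subseteq> S \<rightarrow>\<^sub>E S" using gm_in[OF sr] unfolding F_def by auto
  hence "finite (range F)" using finite_PiE[OF fin, of "\<lambda>_. S"] fin finite_subset by blast
  hence "\<not> inj F" using finite_imageD infinite_UNIV_nat by blast
  then obtain a0 b0 where "a0 \<noteq> b0" "F a0 = F b0" unfolding inj_def by blast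
  then obtain a b where ab: "a < b" "F a = F b"
    by (metis linorder_neqE_nat)
  have eqab: "gm add a x = gm add b x" if "x \<in> S" for x
    using ab(2) that unfolding F_def by (metis restrict_apply')
  define p where "p = b - a"
  have p1: "p \<ge> 1" using ab unfolding p_def by simp
  have c1: "gm add (c + p) x = gm add c x" if "c \<ge> a" "x \<in> S" for c x
  proof -
    obtain d where d: "c = a + d" using \<open>c \<ge> a\<close> le_Suc_ex by blast
    show ?thesis
    proof (cases d)
      case 0 then show ?thesis using d eqab[OF that(2)] ab unfolding p_def by simp
    next
      case (Suc d')
      have "gm add (c + p) x = gm add (Suc (b + d')) x" using d Suc ab unfolding p_def by (simp add: add.commute)
      also have "\<dots> = add (gm add b x) (gm add d' x)" using gm_add_idx[OF sr that(2)] by simp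
      also have "\<dots> = add (gm add a x) (gm add d' x)" using eqab[OF that(2)] by simp
      also have "\<dots> = gm add (Suc (a + d')) x" using gm_add_idx[OF sr that(2)] by simp
      finally show ?thesis using d Suc by simp
    qed
  qed
  have c2: "gm add (c + k * p) x = gm add c x" if "c \<ge> a" "x \<in> S" for c k x
  proof (induction k)
    case 0 then show ?case by simp
  next
    case (Suc k)
    have "gm add (c + Suc k * p) x = gm add ((c + k * p) + p) x" by (simp add: algebra_simps)
    also have "\<dots> = gm add (c + k * p) x" using c1 that by simp
    finally show ?case using Suc by simp
  qed
  define N where "N = Suc a * p - 1"
  have SN: "Suc N = Suc a * p" using p1 unfolding N_def by simp
  have "Suc a * 1 \<le> Suc a * p" using p1 by (rule mult_le_mono2)
  hence Na: "N \<ge> a" using SN by simp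
  show ?thesis
  proof (rule that, intro ballI conjI)
    fix x assume x: "x \<in> S"
    have "gm add N (gm add N x) = gm add (N*N+N+N) x" using gm_gm[OF sr x] by simp
    also have "N*N+N+N = N + N * Suc N" by simp
    also have "\<dots> = N + (N * Suc a) * p" using SN by (simp only: mult.assoc)
    also have "gm add (N + (N * Suc a) * p) x = gm add N x" using c2 Na x by blast
    finally show "gm add N (gm add N x) = gm add N x" .
    have "add (gm add N x) (gm add N x) = gm add (Suc (N+N)) x" using gm_add_idx[OF sr x] by simp
    also have "Suc (N+N) = N + 1 * p * Suc a" using SN by (simp add: mult.commute)
    also have "\<dots> = N + Suc a * p" by simp
    also have "gm add (N + Suc a * p) x = gm add N x" using c2[OF Na x, of "Suc a"] by simp
    finally show "add (gm add N x) (gm add N x) = gm add N x" .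
  qed
qed


lemma no_nil:
  assumes sr: "semiring_on S add mul" and fin: "finite S"
    and inf: "is_infinity S add mul w"
    and split: "\<forall>x\<in>S. \<exists>u\<in>S. \<exists>v\<in>S. x = add u v"
    and nil: "\<forall>t\<in>S. gm add N t = w"
    and x0: "x0 \<in> S" "x0 \<noteq> w"
  shows False
proof -
  define X where "X = S - {w}"
  define r where "r = {(y,x). x \<in> X \<and> y \<in> X \<and> (\<exists>t\<in>S. x = add t y)}"
  have cl: "\<forall>u\<in>S. \<forall>v\<in>S. add u v \<in> S"
   and as: "\<forall>u\<in>S. \<forall>v\<in>S. \<forall>z\<in>S. add (add u v) z = add u (add v z)"
    using sr unfolding semiring_on_def by auto
  have winf: "w \<in> S" "\<forall>x\<in>S. add w x = w \<and> add x w = w" using inf unfolding is_infinity_def by auto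
  have finr: "finite r"
    by (rule finite_subset[of _ "X \<times> X"]) (auto simp: r_def X_def fin)
  have trr: "trans r"
  proof (rule transI)
    fix x y z assume "(x,y) \<in> r" "(y,z) \<in> r"
    then obtain t t' where "t \<in> S" "t' \<in> S" "y = add t x" "z = add t' y" "x \<in> X" "z \<in> X"
      unfolding r_def by auto
    moreover have "add t' (add t x) = add (add t' t) x" using as \<open>t \<in> S\<close> \<open>t' \<in> S\<close> \<open>x \<in> X\<close> X_def by auto
    moreover have "add t' t \<in> S" using cl \<open>t \<in> S\<close> \<open>t' \<in> S\<close> by auto
    ultimately show "(x,z) \<in> r" unfolding r_def by auto
  qed
  show False
  proof (cases "acyclic r")
    case True
    hence "wf r" using finite_acyclic_wf finr by blast
    then obtain z where z: "z \<in> X" "\<forall>y. (y,z) \<in> r \<longrightarrow> y \<notin> X"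
      using x0 unfolding wf_eq_minimal X_def by (metis Diff_iff singletonD)
    then obtain u v where uv: "u \<in> S" "v \<in> S" "z = add u v" using split X_def by auto
    have "v \<noteq> w" using uv winf z X_def by auto
    hence "(v,z) \<in> r" using uv z unfolding r_def X_def by auto
    then show False using z uv \<open>v \<noteq> w\<close> X_def by auto
  next
    case False
    then obtain x where "(x,x) \<in> r" unfolding acyclic_def using trr by auto
    then obtain t where t: "t \<in> S" "x \<in> X" "x = add t x" unfolding r_def by auto
    have xS: "x \<in> S" using t X_def by auto
    have "x = add (gm add n t) x" for n
    proof (induction n)
      case 0 then show ?case using t by simp
    next
      case (Suc n)
      have "add (gm add (Suc n) t) x = add t (add (gm add n t) x)"
        using as gm_in[OF sr t(1)] t xS by simp
      then show ?case using Suc t by simp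
    qed
    hence "x = add w x" using nil t by metis
    then show False using winf xS t X_def by auto
  qed
qed

theorem lemma3p1:
  fixes S :: "'a set" and add mul :: "'a \<Rightarrow> 'a \<Rightarrow> 'a" and inf :: 'a
  assumes "semiring_on S add mul"
    and "finite S"
    and "add_commutative_on S add"
    and "congruence_simple S add mul"
    and "is_infinity S add mul inf"
    and "card S > 2"
  shows "(\<forall>x\<in>S. add x x = x) \<or>
         ((\<forall>x\<in>S. \<forall>y\<in>S. add x y = inf) \<and> congruence_free S mul)"
proof -
  note sr = assms(1) and fin = assms(2) and cm = assms(3) and cs = assms(4) and inf = assms(5)
  have cl: "\<forall>u\<in>S. \<forall>v\<in>S. add u v \<in> S \<and> mul u v \<in> S"
   and dl: "\<forall>a\<in>S. \<forall>b\<in>S. \<forall>c\<in>S. mul a (add b c) = add (mul a b) (mul a c)"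
   and dr: "\<forall>a\<in>S. \<forall>b\<in>S. \<forall>c\<in>S. mul (add a b) c = add (mul a c) (mul b c)"
    using sr unfolding semiring_on_def by auto
  have winf: "inf \<in> S" "\<forall>x\<in>S. add inf x = inf \<and> add x inf = inf \<and> mul inf x = inf \<and> mul x inf = inf"
    using inf unfolding is_infinity_def by auto
  have other: "\<exists>y\<in>S. y \<noteq> x" for x
  proof (rule ccontr)
    assume "\<not> ?thesis"
    hence "S \<subseteq> {x}" by auto
    hence "card S \<le> card {x}" by (intro card_mono) auto
    hence "card S \<le> 1" by simp
    then show False using assms(6) by simp
  qed
  define P where "P = {add x y | x y. x \<in> S \<and> y \<in> S}"
  define R where "R = Id_on S \<union> P \<times> P"
  have PS: "P \<subseteq> S" using cl P_def by auto
  have Rc: "semiring_congruence S add mul R"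
    unfolding semiring_congruence_def
  proof (rule conjI, goal_cases)
    case 1
    show "equiv S R" unfolding equiv_def refl_on_def sym_def trans_def R_def using PS by auto
  next
    case 2 show ?case proof (intro allI impI)
    fix x1 x2 c assume h: "(x1, x2) \<in> R \<and> c \<in> S"
    show "(add c x1, add c x2) \<in> R \<and> (add x1 c, add x2 c) \<in> R \<and>
          (mul c x1, mul c x2) \<in> R \<and> (mul x1 c, mul x2 c) \<in> R"
    proof (cases "x1 = x2")
      case True
      have "x1 \<in> S" using h PS unfolding R_def by auto
      then show ?thesis using True h cl unfolding R_def by auto
    next
      case False
      then have x: "x1 \<in> P" "x2 \<in> P" using h unfolding R_def by auto
      have mP: "mul c z \<in> P \<and> mul z c \<in> P" if zP: "z \<in> P" for z
      proof -
        obtain u v where "u \<in> S" "v \<in> S" "z = add u v" using zP unfolding P_def by blast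
        note uv = this
        have "mul c z = add (mul c u) (mul c v)" using dl h uv by simp
        moreover have "mul c u \<in> S" "mul c v \<in> S" using cl h uv by auto
        ultimately have 1: "mul c z \<in> P" unfolding P_def by blast
        have "mul z c = add (mul u c) (mul v c)" using dr h uv by simp
        moreover have "mul u c \<in> S" "mul v c \<in> S" using cl h uv by auto
        ultimately have 2: "mul z c \<in> P" unfolding P_def by blast
        show ?thesis using 1 2 by simp
      qed
      have "add c x1 \<in> P" "add c x2 \<in> P" "add x1 c \<in> P" "add x2 c \<in> P"
        using x PS h unfolding P_def by blast+
      then show ?thesis using mP x unfolding R_def by auto
    qed
    qed
  qed
  have "R = Id_on S \<or> R = S \<times> S" using cs Rc unfolding congruence_simple_def by blast
  then show ?thesis
  proof
    assume RI: "R = Id_on S"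
    have sums: "\<forall>x\<in>S. \<forall>y\<in>S. add x y = inf"
    proof (intro ballI)
      fix x y assume "x \<in> S" "y \<in> S"
      have ii: "inf = add inf inf" using winf by auto
      have "add x y \<in> P" using \<open>x \<in> S\<close> \<open>y \<in> S\<close> unfolding P_def by blast
      moreover have "inf \<in> P" using winf(1) ii unfolding P_def by blast
      ultimately
      have "(add x y, inf) \<in> R" unfolding R_def by auto
      then show "add x y = inf" using RI by auto
    qed
    have "congruence_free S mul" unfolding congruence_free_def
    proof (intro allI impI)
      fix Q assume Q: "semigroup_congruence S mul Q"
      have "semiring_congruence S add mul Q"
        unfolding semiring_congruence_def
      proof (rule conjI, goal_cases)
    case 1
        show "equiv S Q" using Q unfolding semigroup_congruence_def by auto
      next
        case 2 show ?case proof (intro allI impI)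
        fix x1 x2 c assume h: "(x1, x2) \<in> Q \<and> c \<in> S"
        have "x1 \<in> S" "x2 \<in> S" using h Q unfolding semigroup_congruence_def equiv_def refl_on_def by auto
        moreover have "(inf, inf) \<in> Q" using winf Q unfolding semigroup_congruence_def equiv_def refl_on_def by auto
        ultimately show "(add c x1, add c x2) \<in> Q \<and> (add x1 c, add x2 c) \<in> Q \<and>
          (mul c x1, mul c x2) \<in> Q \<and> (mul x1 c, mul x2 c) \<in> Q"
        proof -
          have a1: "add c x1 = inf" "add c x2 = inf" "add x1 c = inf" "add x2 c = inf"
            using sums h \<open>x1 \<in> S\<close> \<open>x2 \<in> S\<close> by auto
          have "(mul c x1, mul c x2) \<in> Q \<and> (mul x1 c, mul x2 c) \<in> Q"
            using h Q unfolding semigroup_congruence_def by blast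
          then show ?thesis using a1 \<open>(inf, inf) \<in> Q\<close> by simp
        qed
        qed
      qed
      then show "Q = Id_on S \<or> Q = S \<times> S" using cs unfolding congruence_simple_def by blast
    qed
    then show ?thesis using sums by blast
  next
    assume RS: "R = S \<times> S"
    have split: "\<forall>x\<in>S. \<exists>u\<in>S. \<exists>v\<in>S. x = add u v"
    proof
      fix x assume x: "x \<in> S"
      obtain y where "y \<in> S" "y \<noteq> x" using other by blast
      hence "(x,y) \<in> R" using RS x by auto
      hence "x \<in> P" using \<open>y \<noteq> x\<close> unfolding R_def by auto
      then show "\<exists>u\<in>S. \<exists>v\<in>S. x = add u v" unfolding P_def by auto
    qed
    obtain N where N: "\<forall>x\<in>S. gm add N (gm add N x) = gm add N x \<and> add (gm add N x) (gm add N x) = gm add N x"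
      using gm_period[OF sr cm fin] by blast
    define K where "K = {(x,y). x \<in> S \<and> y \<in> S \<and> gm add N x = gm add N y}"
    have Kc: "semiring_congruence S add mul K"
      unfolding semiring_congruence_def
    proof (rule conjI, goal_cases)
    case 1
      show "equiv S K" unfolding equiv_def refl_on_def sym_def trans_def K_def by auto
    next
      case 2 show ?case proof (intro allI impI)
      fix x1 x2 c assume h: "(x1, x2) \<in> K \<and> c \<in> S"
      hence x: "x1 \<in> S" "x2 \<in> S" "gm add N x1 = gm add N x2" "c \<in> S" unfolding K_def by auto
      show "(add c x1, add c x2) \<in> K \<and> (add x1 c, add x2 c) \<in> K \<and>
          (mul c x1, mul c x2) \<in> K \<and> (mul x1 c, mul x2 c) \<in> K"
      proof -
        have m: "gm add N (mul c x1) = gm add N (mul c x2)" "gm add N (mul x1 c) = gm add N (mul x2 c)"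
          using mul_gm[OF sr x(1) x(4), of N] mul_gm[OF sr x(2) x(4), of N] x(3) by auto
        show ?thesis unfolding K_def using x m cl gm_distrib[OF sr cm] by simp
      qed
      qed
    qed
    have "K = Id_on S \<or> K = S \<times> S" using cs Kc unfolding congruence_simple_def by blast
    then show ?thesis
    proof
      assume KI: "K = Id_on S"
      have "add x x = x" if x: "x \<in> S" for x
      proof -
        have "(gm add N x, x) \<in> K" using N x gm_in[OF sr x] unfolding K_def by auto
        hence "gm add N x = x" using KI by auto
        then show ?thesis using N x by metis
      qed
      then show ?thesis by blast
    next
      assume KS: "K = S \<times> S"
      have nil: "\<forall>t\<in>S. gm add N t = inf"
      proof
        fix t assume "t \<in> S"
        hence "(t, inf) \<in> K" using KS winf by auto
        then show "gm add N t = inf" unfolding K_def using gm_inf[OF inf] by auto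
      qed
      obtain x0 where "x0 \<in> S" "x0 \<noteq> inf" using other by blast
      then show ?thesis using no_nil[OF sr fin inf split nil] by blast
    qed
  qed
qed

end
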